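(* If a stationary renewal process is a finitary factor of an i.i.d.\ process, then its jump distribution is non-lattice and has exponential tails.
   Context: A (discrete) renewal process is a $\{0,1\}$-valued process $X=(X_n)_{n\in\mathbb Z}$ with infinitely many 1's in both directions such that the distances between consecutive 1's are i.i.d.; their common law, a distribution $T$ on the positive integers, is the jump distribution. $T$ is non-lattice if $\gcd\{t:\mathbb P(T=t)>0\}=1$, and has exponential tails if there are $C,c>0$ with $\mathbb P(T\ge t)\le Ce^{-ct}$ for all $t\ge1$. A process $X$ is a factor of $Y=(Y_n)_{n\in\mathbb Z}$ if $X_n=\varphi(\dots,Y_{n-1},Y_n,Y_{n+1},\dots)$ for a measurable, shift-equivariant $\varphi$; it is finitary if there is an almost surely finite stopping time $R$ for the filtration $\mathcal F_r=\sigma(Y_n:|n|\le r)$ such that $X_0$ is $\mathcal F_R$-measurable. *)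

theory Defs
  imports "HOL-Probability.Probability"
begin

text \<open>The i.i.d. process: coordinate process on the product space S^Z with
  product measure (every coordinate has law mu).\<close>

definition iid_space :: "'a measure \<Rightarrow> (int \<Rightarrow> 'a) measure" where
  "iid_space \<mu> = PiM UNIV (\<lambda>_::int. \<mu>)"

definition factor_proc :: "((int \<Rightarrow> 'a) \<Rightarrow> bool) \<Rightarrow> int \<Rightarrow> (int \<Rightarrow> 'a) \<Rightarrow> bool" where
  "factor_proc \<phi> n y = \<phi> (\<lambda>k. y (n + k))"

definition window_filtration :: "'a measure \<Rightarrow> enat \<Rightarrow> (int \<Rightarrow> 'a) measure" where
  "window_filtration \<mu> r =
     sigma (space (iid_space \<mu>))
       {{y \<in> space (iid_space \<mu>). y n \<in> A} | n A. enat (nat \<bar>n\<bar>) \<le> r \<and> A \<in> sets \<mu>}"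

definition finitary_factor :: "'a measure \<Rightarrow> ((int \<Rightarrow> 'a) \<Rightarrow> bool) \<Rightarrow> bool" where
  "finitary_factor \<mu> \<phi> \<longleftrightarrow>
     \<phi> \<in> measurable (iid_space \<mu>) (count_space UNIV) \<and>
     (\<exists>R. stopping_time (window_filtration \<mu>) R \<and>
          (AE y in iid_space \<mu>. R y \<noteq> \<infinity>) \<and>
          \<phi> \<in> measurable (filtration.pre_sigma (space (iid_space \<mu>)) (window_filtration \<mu>) R)
                        (count_space UNIV))"

definition non_lattice :: "nat pmf \<Rightarrow> bool" where
  "non_lattice T \<longleftrightarrow> Gcd {t. pmf T t > 0} = 1"

definition exponential_tails :: "nat pmf \<Rightarrow> bool" where
  "exponential_tails T \<longleftrightarrow>
     (\<exists>C c. C > 0 \<and> c > 0 \<and> (\<forall>t\<ge>1. measure_pmf.prob T {t..} \<le> C * exp (- c * real t)))"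

text \<open>Stationary renewal process (with values True = 1, False = 0) on a probability space M
  with jump distribution T:
  stationary, a.s. infinitely many 1's in both directions, and, given X_0 = 1, the successive
  distances t_1, ..., t_k between consecutive 1's after time 0 are i.i.d. with law T
  (by stationarity this is equivalent to the two-sided i.i.d. gap structure of the Palm version).\<close>

definition ones_pattern :: "nat list \<Rightarrow> int set" where
  "ones_pattern ts = {int (sum_list (take j ts)) | j. 1 \<le> j \<and> j \<le> length ts}"

definition stationary_renewal :: "'w measure \<Rightarrow> (int \<Rightarrow> 'w \<Rightarrow> bool) \<Rightarrow> nat pmf \<Rightarrow> bool" where
  "stationary_renewal M X T \<longleftrightarrow>
     prob_space M \<and>
     (\<forall>n. X n \<in> measurable M (count_space UNIV)) \<and>
     (\<forall>k. distr M (PiM UNIV (\<lambda>_::int. count_space UNIV)) (\<lambda>w n. X (n + k) w)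
          = distr M (PiM UNIV (\<lambda>_::int. count_space UNIV)) (\<lambda>w n. X n w)) \<and>
     (AE w in M. infinite {n. n \<ge> 0 \<and> X n w} \<and> infinite {n. n \<le> 0 \<and> X n w}) \<and>
     pmf T 0 = 0 \<and>
     (\<forall>ts. (\<forall>t\<in>set ts. t > 0) \<longrightarrow>
        measure M {w \<in> space M. X 0 w \<and>
            (\<forall>m\<in>{1..int (sum_list ts)}. X m w \<longleftrightarrow> m \<in> ones_pattern ts)}
        = measure M {w \<in> space M. X 0 w} * (\<Prod>t\<leftarrow>ts. pmf T t))"

end

theory Submission
  imports Defs
begin



definition sh :: "int \<Rightarrow> (int \<Rightarrow> 'a) \<Rightarrow> (int \<Rightarrow> 'a)" where
  "sh n y = (\<lambda>k. y (n + k))"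

definition coord :: "'a measure \<Rightarrow> int set \<Rightarrow> (int \<Rightarrow> 'a) measure" where
  "coord \<mu> I = sigma (space (iid_space \<mu>))
       {{y \<in> space (iid_space \<mu>). y n \<in> A} | n A. n \<in> I \<and> A \<in> sets \<mu>}"

lemma space_iid: "space (iid_space \<mu>) = UNIV \<rightarrow> space \<mu>"
  by (simp add: iid_space_def space_PiM PiE_def)

lemma gen_Pow: "{{y \<in> space (iid_space \<mu>). y n \<in> A} | n A. n \<in> I \<and> A \<in> sets \<mu>} \<subseteq> Pow (space (iid_space \<mu>))"
  by auto

lemma sets_coord: "sets (coord \<mu> I) = sigma_sets (space (iid_space \<mu>))
       {{y \<in> space (iid_space \<mu>). y n \<in> A} | n A. n \<in> I \<and> A \<in> sets \<mu>}"
  unfolding coord_def by (rule sets_measure_of[OF gen_Pow])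

lemma space_coord: "space (coord \<mu> I) = space (iid_space \<mu>)"
  unfolding coord_def by (rule space_measure_of[OF gen_Pow])

lemma coord_mono: "I \<subseteq> J \<Longrightarrow> sets (coord \<mu> I) \<subseteq> sets (coord \<mu> J)"
  unfolding sets_coord by (rule sigma_sets_mono') auto

lemma coord_sub: "sets (coord \<mu> I) \<subseteq> sets (iid_space \<mu>)"
  unfolding sets_coord
proof (rule sets.sigma_sets_subset)
  show "{{y \<in> space (iid_space \<mu>). y n \<in> A} | n A. n \<in> I \<and> A \<in> sets \<mu>} \<subseteq> sets (iid_space \<mu>)"
  proof safe
    fix n A assume "A \<in> sets \<mu>"
    then show "{y \<in> space (iid_space \<mu>). y n \<in> A} \<in> sets (iid_space \<mu>)"
      unfolding iid_space_def by measurable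
  qed
qed

lemma window_coord: "window_filtration \<mu> (enat r) = coord \<mu> {- int r .. int r}"
proof -
  have "\<And>n::int. (enat (nat \<bar>n\<bar>) \<le> enat r) = (n \<in> {- int r .. int r})" by auto
  then show ?thesis unfolding window_filtration_def coord_def by simp
qed

lemma space_window: "space (window_filtration \<mu> r) = space (iid_space \<mu>)"
  unfolding window_filtration_def by (rule space_measure_of) auto

lemma window_mono: "r \<le> s \<Longrightarrow> sets (window_filtration \<mu> r) \<subseteq> sets (window_filtration \<mu> s)"
  unfolding window_filtration_def
  apply (subst sets_measure_of, fastforce)+
  apply (rule sigma_sets_mono')
  using order_trans by fastforce

lemma sh_space: "y \<in> space (iid_space \<mu>) \<Longrightarrow> sh n y \<in> space (iid_space \<mu>)"
  by (auto simp: space_iid sh_def)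

lemma sh_measurable_coord:
  "sh k \<in> measurable (coord \<mu> ((\<lambda>i. k + i) ` I)) (coord \<mu> I)"
  unfolding coord_def[of _ I]
proof (rule measurable_measure_of)
  show "sh k \<in> space (coord \<mu> ((+) k ` I)) \<rightarrow> space (iid_space \<mu>)"
    by (auto simp: space_coord sh_space)
  show "{{y \<in> space (iid_space \<mu>). y n \<in> A} | n A. n \<in> I \<and> A \<in> sets \<mu>} \<subseteq> Pow (space (iid_space \<mu>))"
    by auto
  fix Y assume "Y \<in> {{y \<in> space (iid_space \<mu>). y n \<in> A} | n A. n \<in> I \<and> A \<in> sets \<mu>}"
  then obtain n A where Y: "Y = {y \<in> space (iid_space \<mu>). y n \<in> A}" "n \<in> I" "A \<in> sets \<mu>" by auto
  have "sh k -` Y \<inter> space (coord \<mu> ((+) k ` I)) = {y \<in> space (iid_space \<mu>). y (k+n) \<in> A}"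
    using Y by (auto simp: space_coord space_iid sh_def)
  also have "\<dots> \<in> sets (coord \<mu> ((+) k ` I))"
    unfolding sets_coord using Y by (intro sigma_sets.Basic) blast
  finally show "sh k -` Y \<inter> space (coord \<mu> ((+) k ` I)) \<in> sets (coord \<mu> ((+) k ` I))" .
qed

lemma sh_coord: "A \<in> sets (coord \<mu> I) \<Longrightarrow> sh k -` A \<inter> space (iid_space \<mu>) \<in> sets (coord \<mu> ((\<lambda>i. k + i) ` I))"
  using measurable_sets[OF sh_measurable_coord] by (metis space_coord)

lemma sh_measurable: "sh k \<in> measurable (iid_space \<mu>) (iid_space \<mu>)"
  unfolding iid_space_def sh_def
  by (rule measurable_PiM_single') (auto simp: space_PiM)

lemma sh_distr:
  assumes "prob_space \<mu>"
  shows "distr (iid_space \<mu>) (iid_space \<mu>) (sh k) = iid_space \<mu>"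
proof -
  have eq2: "(\<lambda>\<omega>. \<lambda>n\<in>UNIV. \<omega> ((\<lambda>n. k + n) n)) = (\<lambda>y ka. y (k + ka))"
    by (auto simp: restrict_def)
  have "distr (Pi\<^sub>M UNIV (\<lambda>_::int. \<mu>)) (\<Pi>\<^sub>M i\<in>UNIV. (\<lambda>_::int. \<mu>) ((\<lambda>n. k + n) i)) (\<lambda>\<omega>. \<lambda>n\<in>UNIV. \<omega> ((\<lambda>n. k + n) n)) = (\<Pi>\<^sub>M i\<in>UNIV. (\<lambda>_::int. \<mu>) ((\<lambda>n. k + n) i))"
    by (rule distr_PiM_reindex) (auto simp: assms)
  then have "distr (Pi\<^sub>M UNIV (\<lambda>_::int. \<mu>)) (Pi\<^sub>M UNIV (\<lambda>_::int. \<mu>)) (\<lambda>y ka. y (k + ka)) = Pi\<^sub>M UNIV (\<lambda>_::int. \<mu>)"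
    unfolding eq2 .
  then show ?thesis unfolding iid_space_def sh_def .
qed

lemma sh_measure:
  assumes "prob_space \<mu>" "A \<in> sets (iid_space \<mu>)"
  shows "measure (iid_space \<mu>) (sh k -` A \<inter> space (iid_space \<mu>)) = measure (iid_space \<mu>) A"
proof -
  have "measure (distr (iid_space \<mu>) (iid_space \<mu>) (sh k)) A = measure (iid_space \<mu>) (sh k -` A \<inter> space (iid_space \<mu>))"
    by (rule measure_distr[OF sh_measurable assms(2)])
  then show ?thesis using sh_distr[OF assms(1)] by simp
qed




lemma iid_prob: "prob_space \<mu> \<Longrightarrow> prob_space (iid_space \<mu>)"
  unfolding iid_space_def by (rule prob_space_PiM) auto

lemma coord_indep_vars:
  assumes mu: "prob_space \<mu>"
  shows "prob_space.indep_vars (iid_space \<mu>) (\<lambda>_. \<mu>) (\<lambda>i y. y i) UNIV"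
proof -
  interpret P: prob_space "iid_space \<mu>" by (rule iid_prob[OF mu])
  have rv: "\<And>i. (\<lambda>y. y i) \<in> measurable (iid_space \<mu>) \<mu>"
    unfolding iid_space_def by measurable
  have comp: "\<And>i. distr (iid_space \<mu>) \<mu> (\<lambda>y. y i) = \<mu>"
    unfolding iid_space_def by (rule distr_PiM_component) (auto simp: mu)
  have e: "(\<lambda>x. \<lambda>i\<in>UNIV. x i) = (\<lambda>x::int\<Rightarrow>'a. x)" by (auto simp: restrict_def)
  have "distr (iid_space \<mu>) (\<Pi>\<^sub>M i\<in>UNIV. \<mu>) (\<lambda>x. \<lambda>i\<in>UNIV. x i) = (\<Pi>\<^sub>M i\<in>UNIV. distr (iid_space \<mu>) \<mu> (\<lambda>y. y i))"
    unfolding e comp by (simp add: iid_space_def distr_id2)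
  then show ?thesis
    by (subst P.indep_vars_iff_distr_eq_PiM) (auto simp: rv)
qed

lemma coord_indep:
  assumes mu: "prob_space \<mu>" and A: "A \<in> sets (coord \<mu> I)" and B: "B \<in> sets (coord \<mu> J)"
    and IJ: "I \<inter> J = {}"
  shows "measure (iid_space \<mu>) (A \<inter> B) = measure (iid_space \<mu>) A * measure (iid_space \<mu>) B"
proof -
  interpret P: prob_space "iid_space \<mu>" by (rule iid_prob[OF mu])
  let ?E = "\<lambda>i. {(\<lambda>y. y i) -` C \<inter> space (iid_space \<mu>) | C. C \<in> sets \<mu>}"
  let ?K = "case_bool I J"
  have ind: "P.indep_sets ?E UNIV"
    using coord_indep_vars[OF mu] unfolding P.indep_vars_def2 by auto
  have "P.indep_sets (\<lambda>j. sigma_sets (space (iid_space \<mu>)) (\<Union>i\<in>?K j. ?E i)) UNIV"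
  proof (rule P.indep_sets_collect_sigma)
    show "P.indep_sets ?E (\<Union>j\<in>UNIV. ?K j)" using P.indep_sets_mono_index[OF _ ind] by simp
    show "Int_stable (?E i)" for i
      apply (auto simp: Int_stable_def)
      apply (rule_tac x="C \<inter> Ca" in exI)
      apply auto
      done
    show "disjoint_family_on ?K UNIV" using IJ by (auto simp: disjoint_family_on_def split: bool.split)
  qed
  moreover have gen: "\<And>K. (\<Union>i\<in>K. ?E i) = {{y \<in> space (iid_space \<mu>). y n \<in> A} | n A. n \<in> K \<and> A \<in> sets \<mu>}"
    by blast
  ultimately have ind2: "P.indep_sets (\<lambda>j. sets (coord \<mu> (?K j))) UNIV"
    unfolding sets_coord gen by simp
  have "P.prob (\<Inter>j\<in>UNIV. case_bool A B j) = (\<Prod>j\<in>UNIV. P.prob (case_bool A B j))"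
    by (rule P.indep_setsD[OF ind2]) (use A B in \<open>auto split: bool.split\<close>)
  then show ?thesis by (simp add: UNIV_bool Int_commute)
qed




locale rp =
  fixes \<mu> :: "'a measure" and \<phi> :: "(int \<Rightarrow> 'a) \<Rightarrow> bool" and T :: "nat pmf"
  assumes mu: "prob_space \<mu>"
    and ff: "finitary_factor \<mu> \<phi>"
    and sr: "stationary_renewal (iid_space \<mu>) (factor_proc \<phi>) T"
begin

abbreviation "M \<equiv> iid_space \<mu>"
abbreviation "\<Omega> \<equiv> space (iid_space \<mu>)"
abbreviation "X \<equiv> factor_proc \<phi>"
abbreviation "pr \<equiv> measure (iid_space \<mu>)"

sublocale P: prob_space "iid_space \<mu>" by (rule iid_prob[OF mu])

definition R where "R = (SOME R. stopping_time (window_filtration \<mu>) R \<and>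
          (AE y in iid_space \<mu>. R y \<noteq> \<infinity>) \<and>
          \<phi> \<in> measurable (filtration.pre_sigma (space (iid_space \<mu>)) (window_filtration \<mu>) R)
                        (count_space UNIV))"

lemma R_props: "stopping_time (window_filtration \<mu>) R" "AE y in M. R y \<noteq> \<infinity>"
  "\<phi> \<in> measurable (filtration.pre_sigma \<Omega> (window_filtration \<mu>) R) (count_space UNIV)"
proof -
  have "\<exists>R. stopping_time (window_filtration \<mu>) R \<and>
          (AE y in iid_space \<mu>. R y \<noteq> \<infinity>) \<and>
          \<phi> \<in> measurable (filtration.pre_sigma (space (iid_space \<mu>)) (window_filtration \<mu>) R)
                        (count_space UNIV)"
    using ff unfolding finitary_factor_def by blast
  from someI_ex[OF this] show "stopping_time (window_filtration \<mu>) R" "AE y in M. R y \<noteq> \<infinity>"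
  "\<phi> \<in> measurable (filtration.pre_sigma \<Omega> (window_filtration \<mu>) R) (count_space UNIV)"
    unfolding R_def by auto
qed

lemma X_meas[measurable]: "X n \<in> measurable M (count_space UNIV)"
  using sr unfolding stationary_renewal_def by blast

lemma X_0: "X 0 y = \<phi> y" by (simp add: factor_proc_def)

lemma X_sh: "X n y = \<phi> (sh n y)" by (simp add: factor_proc_def sh_def)

lemma X_shift: "X (i + k) y = X i (sh k y)"
  by (simp add: factor_proc_def sh_def algebra_simps)

lemma stat:
  assumes "{y \<in> \<Omega>. Q (\<lambda>i. X i y)} \<in> sets M"
  shows "pr {y \<in> \<Omega>. Q (\<lambda>i. X (i + k) y)} = pr {y \<in> \<Omega>. Q (\<lambda>i. X i y)}"
proof -
  have "{y \<in> \<Omega>. Q (\<lambda>i. X (i + k) y)} = sh k -` {y \<in> \<Omega>. Q (\<lambda>i. X i y)} \<inter> \<Omega>"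
    by (auto simp: X_shift sh_space)
  then show ?thesis using sh_measure[OF mu assms] by simp
qed

interpretation F: filtration \<Omega> "window_filtration \<mu>"
  by unfold_locales (auto simp: space_window window_mono)

lemma G_coord: "{y \<in> \<Omega>. \<phi> y = b \<and> R y \<le> enat r} \<in> sets (coord \<mu> {- int r .. int r})"
proof -
  have "\<phi> -` {b} \<inter> space (F.pre_sigma R) \<in> sets (F.pre_sigma R)"
    using R_props(3) by (rule measurable_sets) simp
  then have "{\<omega> \<in> \<phi> -` {b} \<inter> \<Omega>. R \<omega> \<le> enat r} \<in> sets (window_filtration \<mu> (enat r))"
    using F.sets_pre_sigma[OF R_props(1)] F.space_pre_sigma by auto
  moreover have "{\<omega> \<in> \<phi> -` {b} \<inter> \<Omega>. R \<omega> \<le> enat r} = {y \<in> \<Omega>. \<phi> y = b \<and> R y \<le> enat r}" by auto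
  ultimately show ?thesis by (simp add: window_coord)
qed

lemma Rle_sets: "{y \<in> \<Omega>. R y \<le> enat r} \<in> sets M"
proof -
  have "{y \<in> space (window_filtration \<mu> (enat r)). R y \<le> enat r} \<in> sets (window_filtration \<mu> (enat r))"
    using stopping_timeD[OF R_props(1)] by (simp add: Measurable.pred_def)
  then show ?thesis using coord_sub window_coord space_window by (metis subsetD)
qed

lemma H_coord: "{y \<in> \<Omega>. X n y = b \<and> R (sh n y) \<le> enat r} \<in> sets (coord \<mu> {n - int r .. n + int r})"
proof -
  have a: "sh n -` {y \<in> \<Omega>. \<phi> y = b \<and> R y \<le> enat r} \<inter> \<Omega> \<in> sets (coord \<mu> ((\<lambda>i. n + i) ` {- int r .. int r}))"
    by (rule sh_coord[OF G_coord])
  have e1: "sh n -` {y \<in> \<Omega>. \<phi> y = b \<and> R y \<le> enat r} \<inter> \<Omega> = {y \<in> \<Omega>. X n y = b \<and> R (sh n y) \<le> enat r}"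
    by (auto simp: X_sh sh_space)
  have e2: "(\<lambda>i. n + i) ` {- int r .. int r} = {n - int r .. n + int r}"
    by (auto simp: image_iff intro!: exI[of _ "x - n" for x])
  show ?thesis using a unfolding e1 e2 .
qed

lemma H_measure: "pr {y \<in> \<Omega>. X n y = b \<and> R (sh n y) \<le> enat r} = pr {y \<in> \<Omega>. \<phi> y = b \<and> R y \<le> enat r}"
proof -
  have e: "sh n -` {y \<in> \<Omega>. \<phi> y = b \<and> R y \<le> enat r} \<inter> \<Omega> = {y \<in> \<Omega>. X n y = b \<and> R (sh n y) \<le> enat r}"
    by (auto simp: X_sh sh_space)
  have "pr (sh n -` {y \<in> \<Omega>. \<phi> y = b \<and> R y \<le> enat r} \<inter> \<Omega>) = pr {y \<in> \<Omega>. \<phi> y = b \<and> R y \<le> enat r}"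
    by (rule sh_measure[OF mu coord_sub[THEN subsetD, OF G_coord]])
  then show ?thesis unfolding e .
qed

end



context rp begin

definition "p0 = pr {y \<in> \<Omega>. X 0 y}"

lemma Xset[measurable]: "{y \<in> \<Omega>. X n y} \<in> sets M"
  by measurable

lemma palm1:
  assumes "s > 0"
  shows "pr {y \<in> \<Omega>. X 0 y \<and> (\<forall>m\<in>{1..int s}. X m y \<longleftrightarrow> m = int s)} = p0 * pmf T s"
proof -
  have "\<forall>ts. (\<forall>t\<in>set ts. t > 0) \<longrightarrow>
        measure M {w \<in> \<Omega>. X 0 w \<and>
            (\<forall>m\<in>{1..int (sum_list ts)}. X m w \<longleftrightarrow> m \<in> ones_pattern ts)}
        = measure M {w \<in> \<Omega>. X 0 w} * (\<Prod>t\<leftarrow>ts. pmf T t)"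
    using sr unfolding stationary_renewal_def by blast
  from this[rule_format, of "[s]"] assms
  have "pr {w \<in> \<Omega>. X 0 w \<and> (\<forall>m\<in>{1..int s}. X m w \<longleftrightarrow> m \<in> ones_pattern [s])} = p0 * pmf T s"
    by (simp add: p0_def)
  moreover have "ones_pattern [s] = {int s}"
    unfolding ones_pattern_def by (auto intro!: exI[of _ 1])
  ultimately show ?thesis by simp
qed

lemma pmf_T0: "pmf T 0 = 0"
  using sr unfolding stationary_renewal_def by blast

lemma AE_inf: "AE w in M. infinite {n. n \<ge> 0 \<and> X n w}"
  using sr unfolding stationary_renewal_def by auto

lemma stat1: "pr {y \<in> \<Omega>. X n y} = p0"
  using stat[of "\<lambda>f. f 0" n] unfolding p0_def by simp

lemma p0_pos: "p0 > 0"
proof (rule ccontr)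
  assume "\<not> p0 > 0"
  then have z: "p0 = 0" using measure_nonneg[of M] unfolding p0_def by (meson not_le order_antisym)
  have "AE w in M. \<not> X n w" for n
  proof (rule AE_I')
    show "{y \<in> \<Omega>. X n y} \<in> null_sets M"
      using stat1[of n] z by (auto simp: P.emeasure_eq_measure)
  qed auto
  then have "AE w in M. \<forall>n. \<not> X n w" by (simp add: AE_all_countable)
  with AE_inf have "AE w in M. False"
    by eventually_elim auto
  then show False by simp
qed

lemma R_lim:
  assumes A: "A \<in> sets M"
  shows "(\<lambda>r. pr {y \<in> A. R y \<le> enat r}) \<longlonglongrightarrow> pr A"
proof -
  have sA: "A \<subseteq> \<Omega>" using sets.sets_into_space[OF A] .
  have e: "{y \<in> A. R y \<le> enat r} = A \<inter> {y \<in> \<Omega>. R y \<le> enat r}" for r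
    using sA by auto
  have meas: "range (\<lambda>r. {y \<in> A. R y \<le> enat r}) \<subseteq> sets M"
    unfolding e using A Rle_sets by auto
  have inc: "incseq (\<lambda>r. {y \<in> A. R y \<le> enat r})"
    by (auto simp: incseq_def intro: order_trans)
  have "(\<lambda>r. pr {y \<in> A. R y \<le> enat r}) \<longlonglongrightarrow> pr (\<Union>r. {y \<in> A. R y \<le> enat r})"
    by (rule P.finite_Lim_measure_incseq[OF meas inc])
  moreover have "pr (\<Union>r. {y \<in> A. R y \<le> enat r}) = pr A"
  proof (rule P.finite_measure_eq_AE)
    show "AE x in M. (x \<in> (\<Union>r. {y \<in> A. R y \<le> enat r})) = (x \<in> A)"
      using R_props(2)
    proof eventually_elim
      case (elim x)
      then obtain n where "R x = enat n" by auto
      then show ?case by auto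
    qed
    show "(\<Union>r. {y \<in> A. R y \<le> enat r}) \<in> sets M" using meas by auto
  qed (rule A)
  ultimately show ?thesis by simp
qed

end



context rp begin

lemma lat_zero:
  assumes d: "\<And>n. \<not> d dvd n \<Longrightarrow> pmf T n = 0"
  shows "n \<ge> 1 \<Longrightarrow> \<not> d dvd n \<Longrightarrow> pr {y \<in> \<Omega>. X 0 y \<and> X (int n) y} = 0"
proof (induction n rule: less_induct)
  case (less n)
  define E where "E s = {y \<in> \<Omega>. X 0 y \<and> (\<forall>m\<in>{1..int s}. X m y \<longleftrightarrow> m = int s) \<and> X (int n) y}" for s
  have sub: "{y \<in> \<Omega>. X 0 y \<and> X (int n) y} \<subseteq> (\<Union>s\<in>{1..n}. E s)"
  proof
    fix y assume y: "y \<in> {y \<in> \<Omega>. X 0 y \<and> X (int n) y}"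
    define s where "s = (LEAST s. 1 \<le> s \<and> X (int s) y)"
    have ex: "1 \<le> n \<and> X (int n) y" using y less.prems by auto
    have s1: "1 \<le> s \<and> X (int s) y" unfolding s_def by (rule LeastI[of _ n]) (rule ex)
    have sn: "s \<le> n" unfolding s_def by (rule Least_le) (rule ex)
    have "\<forall>m\<in>{1..int s}. X m y \<longleftrightarrow> m = int s"
    proof
      fix m assume m: "m \<in> {1..int s}"
      show "X m y \<longleftrightarrow> m = int s"
      proof
        assume Xm: "X m y"
        have "s \<le> nat m" unfolding s_def by (rule Least_le) (use m Xm in auto)
        then show "m = int s" using m by auto
      qed (use s1 in auto)
    qed
    then show "y \<in> (\<Union>s\<in>{1..n}. E s)" using y s1 sn unfolding E_def by auto
  qed
  have meas: "E s \<in> sets M" for s unfolding E_def by measurable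
  have zero: "pr (E s) = 0" if s: "s \<in> {1..n}" for s
  proof (cases "d dvd s")
    case False
    have "pr (E s) \<le> pr {y \<in> \<Omega>. X 0 y \<and> (\<forall>m\<in>{1..int s}. X m y \<longleftrightarrow> m = int s)}"
      by (rule P.finite_measure_mono) (auto simp: E_def)
    also have "\<dots> = p0 * pmf T s" using s by (intro palm1) auto
    also have "\<dots> = 0" using d[OF False] by simp
    finally show ?thesis by (simp add: measure_le_0_iff)
  next
    case True
    then have sn: "s < n" using s less.prems by (cases "s = n") auto
    have nd: "\<not> d dvd (n - s)"
    proof
      assume "d dvd (n - s)"
      with True have "d dvd (n - s) + s" by simp
      then show False using sn less.prems by simp
    qed
    have "pr (E s) \<le> pr {y \<in> \<Omega>. X (0 + int s) y \<and> X (int (n - s) + int s) y}"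
      using sn s by (intro P.finite_measure_mono) (auto simp: E_def of_nat_diff)
    also have "\<dots> = pr {y \<in> \<Omega>. X 0 y \<and> X (int (n - s)) y}"
      by (rule stat[of "\<lambda>f. f 0 \<and> f (int (n - s))"]) measurable
    also have "\<dots> = 0" using sn nd s by (intro less.IH) auto
    finally show ?thesis by (simp add: measure_le_0_iff)
  qed
  have "pr {y \<in> \<Omega>. X 0 y \<and> X (int n) y} \<le> pr (\<Union>s\<in>{1..n}. E s)"
    using sub meas by (intro P.finite_measure_mono) auto
  also have "\<dots> \<le> (\<Sum>s\<in>{1..n}. pr (E s))"
    using meas by (intro measure_UNION_le) auto
  also have "\<dots> = 0" using zero by simp
  finally show ?case by (simp add: measure_le_0_iff)
qed

lemma exists_r: "\<exists>r. pr {y \<in> \<Omega>. \<phi> y = True \<and> R y \<le> enat r} > 0"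
proof -
  have A: "{y \<in> \<Omega>. \<phi> y} \<in> sets M" using Xset[of 0] by (simp add: X_0)
  have "(\<lambda>r. pr {y \<in> {y \<in> \<Omega>. \<phi> y}. R y \<le> enat r}) \<longlonglongrightarrow> pr {y \<in> \<Omega>. \<phi> y}"
    by (rule R_lim[OF A])
  moreover have "pr {y \<in> \<Omega>. \<phi> y} > 0" using p0_pos by (simp add: p0_def X_0)
  ultimately have "eventually (\<lambda>r. pr {y \<in> {y \<in> \<Omega>. \<phi> y}. R y \<le> enat r} > 0) sequentially"
    by (rule order_tendstoD)
  then obtain r where "pr {y \<in> {y \<in> \<Omega>. \<phi> y}. R y \<le> enat r} > 0"
    by (auto simp: eventually_sequentially)
  moreover have "{y \<in> {y \<in> \<Omega>. \<phi> y}. R y \<le> enat r} = {y \<in> \<Omega>. \<phi> y = True \<and> R y \<le> enat r}" by auto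
  ultimately show ?thesis by metis
qed

lemma nonlattice: "non_lattice T"
  unfolding non_lattice_def
proof (rule ccontr)
  define S where "S = {t. pmf T t > 0}"
  define d where "d = Gcd S"
  assume "Gcd {t. 0 < pmf T t} \<noteq> 1"
  then have d1: "d \<noteq> 1" unfolding d_def S_def by simp
  have dz: "pmf T n = 0" if "\<not> d dvd n" for n
  proof (rule ccontr)
    assume "pmf T n \<noteq> 0"
    then have "n \<in> S" using pmf_nonneg[of T n] unfolding S_def by auto
    then have "d dvd n" unfolding d_def by (rule Gcd_dvd)
    then show False using that by simp
  qed
  have d0: "d \<noteq> 0"
  proof
    assume "d = 0"
    obtain t where t: "t \<in> set_pmf T" using set_pmf_not_empty[of T] by blast
    then have "pmf T t > 0" by (simp add: pmf_positive)
    moreover then have "t \<noteq> 0" using pmf_T0 by (metis less_irrefl)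
    ultimately show False using dz[of t] \<open>d = 0\<close> by auto
  qed
  obtain r where r: "pr {y \<in> \<Omega>. \<phi> y = True \<and> R y \<le> enat r} > 0" using exists_r by blast
  define n where "n = 2 * r * d + 1"
  have nd: "\<not> d dvd n"
  proof
    assume "d dvd n"
    moreover have "d dvd 2 * r * d" by simp
    ultimately have "d dvd 1" unfolding n_def using dvd_add_right_iff[of d "2 * r * d" 1] by simp
    then show False using d1 by simp
  qed
  have n1: "n \<ge> 1" unfolding n_def by simp
  have zero: "pr {y \<in> \<Omega>. X 0 y \<and> X (int n) y} = 0" by (rule lat_zero[OF dz n1 nd])
  let ?A = "{y \<in> \<Omega>. \<phi> y = True \<and> R y \<le> enat r}"
  let ?B = "{y \<in> \<Omega>. X (int n) y = True \<and> R (sh (int n) y) \<le> enat r}"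
  have disj: "{- int r .. int r} \<inter> {int n - int r .. int n + int r} = {}"
  proof -
    have "d \<ge> 2" using d0 d1 by auto
    then have "2 * r * 2 \<le> 2 * r * d" by (intro mult_le_mono2)
    then have "n \<ge> 4 * r + 1" unfolding n_def by simp
    then show ?thesis by auto
  qed
  have "pr (?A \<inter> ?B) = pr ?A * pr ?B"
    by (rule coord_indep[OF mu G_coord H_coord disj])
  also have "\<dots> = pr ?A * pr ?A" using H_measure[of "int n" True r] by simp
  also have "\<dots> > 0" using r by simp
  finally have pos: "pr (?A \<inter> ?B) > 0" .
  have ev: "{y \<in> \<Omega>. X 0 y \<and> X (int n) y} \<in> sets M" by measurable
  have "pr (?A \<inter> ?B) \<le> pr {y \<in> \<Omega>. X 0 y \<and> X (int n) y}"
    by (rule P.finite_measure_mono[OF _ ev]) (auto simp: X_0)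
  then show False using pos zero by simp
qed

end



context rp begin

definition "Z a L = {y \<in> \<Omega>. \<forall>m\<in>{a..<a + int L}. \<not> X m y}"
definition "EE r L a = {y \<in> \<Omega>. \<forall>m\<in>{a..<a + int L}. \<not> (X m y \<and> R (sh m y) \<le> enat r)}"

lemma Z_sets[measurable]: "Z a L \<in> sets M"
  unfolding Z_def by measurable

lemma Z_shift: "pr (Z a L) = pr (Z 0 L)"
proof -
  have e: "(\<forall>m\<in>{0..<int L}. \<not> X (m + a) y) \<longleftrightarrow> (\<forall>m\<in>{a..<a+int L}. \<not> X m y)" for y
  proof
    assume h: "\<forall>m\<in>{0..<int L}. \<not> X (m + a) y"
    show "\<forall>m\<in>{a..<a+int L}. \<not> X m y"
    proof
      fix m assume "m \<in> {a..<a+int L}"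
      then have "m - a \<in> {0..<int L}" by auto
      with h show "\<not> X m y" by fastforce
    qed
  next
    assume h: "\<forall>m\<in>{a..<a+int L}. \<not> X m y"
    show "\<forall>m\<in>{0..<int L}. \<not> X (m + a) y"
    proof
      fix m assume "m \<in> {0..<int L}"
      then have "m + a \<in> {a..<a+int L}" by auto
      with h show "\<not> X (m + a) y" by blast
    qed
  qed
  have "pr {y \<in> \<Omega>. (\<lambda>f. \<forall>m\<in>{0..<int L}. \<not> f m) (\<lambda>i. X (i + a) y)} = pr {y \<in> \<Omega>. (\<lambda>f. \<forall>m\<in>{0..<int L}. \<not> f m) (\<lambda>i. X i y)}"
    by (rule stat) measurable
  then show ?thesis unfolding Z_def using e by simp
qed

lemma H'_coord: "{y \<in> \<Omega>. X n y \<and> R (sh n y) \<le> enat r} \<in> sets (coord \<mu> {n - int r .. n + int r})"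
  using H_coord[of n True r] by simp

lemma EE_coord: "EE r L a \<in> sets (coord \<mu> {a - int r ..< a + int L + int r})"
proof -
  let ?W = "{a - int r ..< a + int L + int r}"
  have "{y \<in> space (coord \<mu> ?W). \<forall>m\<in>{a..<a + int L}. \<not> (X m y \<and> R (sh m y) \<le> enat r)} \<in> sets (coord \<mu> ?W)"
  proof (rule sets.sets_Collect_countable_All')
    fix m assume m: "m \<in> {a..<a + int L}"
    have "{y \<in> \<Omega>. X m y \<and> R (sh m y) \<le> enat r} \<in> sets (coord \<mu> ?W)"
    proof -
      have "{m - int r .. m + int r} \<subseteq> ?W" using m by auto
      then show ?thesis using coord_mono[of "{m - int r .. m + int r}" ?W \<mu>] H'_coord[of m r] by blast
    qed
    then show "{y \<in> space (coord \<mu> ?W). \<not> (X m y \<and> R (sh m y) \<le> enat r)} \<in> sets (coord \<mu> ?W)"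
      using sets.sets_Collect_neg[of "coord \<mu> ?W" "\<lambda>y. X m y \<and> R (sh m y) \<le> enat r"] by (simp only: space_coord)
  qed simp
  then show ?thesis by (simp add: EE_def space_coord)
qed

lemma EE_sets: "EE r L a \<in> sets M"
  using coord_sub EE_coord by blast

lemma EE_bound: "pr (EE r L a) \<le> pr (Z 0 L) + real L * pr (\<Omega> - {y \<in> \<Omega>. R y \<le> enat r})"
proof -
  define Q where "Q = \<Omega> - {y \<in> \<Omega>. R y \<le> enat r}"
  define S where "S m = sh m -` Q \<inter> \<Omega>" for m
  have Q: "Q \<in> sets M" using Rle_sets unfolding Q_def by auto
  have sub: "EE r L a \<subseteq> Z a L \<union> (\<Union>m\<in>{a..<a + int L}. S m)"
    unfolding EE_def Z_def S_def Q_def by (auto simp: sh_space)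
  have ms: "S m \<in> sets M" for m
    using measurable_sets[OF sh_measurable Q] unfolding S_def by simp
  have U: "(\<Union>m\<in>{a..<a + int L}. S m) \<in> sets M" using ms by (intro sets.finite_UN) auto
  have "pr (EE r L a) \<le> pr (Z a L \<union> (\<Union>m\<in>{a..<a + int L}. S m))"
    using sub U by (intro P.finite_measure_mono) auto
  also have "\<dots> \<le> pr (Z a L) + pr (\<Union>m\<in>{a..<a + int L}. S m)"
    using U using Z_sets by (intro measure_Un_le) auto
  also have "pr (\<Union>m\<in>{a..<a + int L}. S m) \<le> (\<Sum>m\<in>{a..<a + int L}. pr (S m))"
    using ms by (intro measure_UNION_le) auto
  also have "\<dots> = (\<Sum>m\<in>{a..<a + int L}. pr Q)"
    using sh_measure[OF mu Q] unfolding S_def by simp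
  also have "\<dots> = real L * pr Q" by simp
  finally show ?thesis using Z_shift[of a L] unfolding Q_def by simp
qed

end



context rp begin

lemma choose_L: "\<exists>L\<ge>1. pr (Z 0 L) \<le> 1/4"
proof -
  have meas: "range (\<lambda>L. Z 0 L) \<subseteq> sets M" by auto
  have dec: "decseq (\<lambda>L. Z 0 L)" unfolding decseq_def Z_def by auto
  have lim: "(\<lambda>L. pr (Z 0 L)) \<longlonglongrightarrow> pr (\<Inter>L. Z 0 L)"
    by (rule P.finite_Lim_measure_decseq[OF meas dec])
  have "pr (\<Inter>L. Z 0 L) = pr {}"
  proof (rule P.finite_measure_eq_AE)
    show "AE x in M. (x \<in> (\<Inter>L. Z 0 L)) = (x \<in> {})"
      using AE_inf
    proof eventually_elim
      case (elim x)
      show ?case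
      proof
        assume x: "x \<in> (\<Inter>L. Z 0 L)"
        have "\<not> (n \<ge> 0 \<and> X n x)" for n :: int
        proof
          assume "n \<ge> 0 \<and> X n x"
          moreover have "x \<in> Z 0 (nat n + 1)" using x by blast
          ultimately show False unfolding Z_def by auto
        qed
        then have "{n. n \<ge> 0 \<and> X n x} = {}" by blast
        then show "x \<in> {}" using elim by (metis finite.emptyI)
      qed simp
    qed
    show "(\<Inter>L. Z 0 L) \<in> sets M" using meas by auto
  qed simp
  then have "(\<lambda>L. pr (Z 0 L)) \<longlonglongrightarrow> 0" using lim by simp
  then have "eventually (\<lambda>L. pr (Z 0 L) < 1/4) sequentially"
    by (rule order_tendstoD) simp
  then obtain N where N: "\<And>L. L \<ge> N \<Longrightarrow> pr (Z 0 L) < 1/4" by (auto simp: eventually_sequentially)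
  show ?thesis using N[of "N+1"] by (intro exI[of _ "N+1"]) auto
qed

lemma choose_r: "\<exists>r. real L * pr (\<Omega> - {y \<in> \<Omega>. R y \<le> enat r}) \<le> 1/4"
proof -
  have "(\<lambda>r. pr {y \<in> \<Omega>. R y \<le> enat r}) \<longlonglongrightarrow> pr \<Omega>"
    by (rule R_lim) simp
  then have "(\<lambda>r. pr {y \<in> \<Omega>. R y \<le> enat r}) \<longlonglongrightarrow> 1" by (simp add: P.prob_space)
  moreover have "1 - 1 / (4 * (real L + 1)) < (1::real)" by simp
  ultimately have "eventually (\<lambda>r. pr {y \<in> \<Omega>. R y \<le> enat r} > 1 - 1 / (4 * (real L + 1))) sequentially"
    by (rule order_tendstoD)
  then obtain r where r: "pr {y \<in> \<Omega>. R y \<le> enat r} > 1 - 1 / (4 * (real L + 1))"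
    by (auto simp: eventually_sequentially)
  have c: "pr (\<Omega> - {y \<in> \<Omega>. R y \<le> enat r}) = 1 - pr {y \<in> \<Omega>. R y \<le> enat r}"
    by (rule P.prob_compl[OF Rle_sets])
  have q: "pr (\<Omega> - {y \<in> \<Omega>. R y \<le> enat r}) \<le> 1 / (4 * (real L + 1))" using r c by simp
  have "real L * pr (\<Omega> - {y \<in> \<Omega>. R y \<le> enat r}) \<le> real L * (1 / (4 * (real L + 1)))"
    using q by (intro mult_left_mono) auto
  also have "\<dots> \<le> 1/4" by (simp add: field_simps)
  finally show ?thesis by blast
qed

end



context rp begin

definition "FF r L K m = {y \<in> \<Omega>. \<forall>j\<in>{..<m}. y \<in> EE r L (1 + int j * int K)}"

lemma blocks:
  assumes half: "\<And>a. pr (EE r L a) \<le> 1/2" and K: "K = L + 2 * r"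
  shows "FF r L K m \<in> sets (coord \<mu> {i. i < 1 + int m * int K - int r}) \<and> pr (FF r L K m) \<le> (1/2)^m"
proof (induction m)
  case 0
  have e: "FF r L K 0 = space (coord \<mu> {i. i < 1 + int 0 * int K - int r})"
    by (simp add: FF_def space_coord)
  show ?case unfolding e using sets.top[of "coord \<mu> {i. i < 1 + int 0 * int K - int r}"]
    by (simp add: space_coord P.prob_space)
next
  case (Suc m)
  define b where "b = 1 + int m * int K"
  have e: "FF r L K (Suc m) = FF r L K m \<inter> EE r L b"
    unfolding FF_def b_def using less_Suc_eq by (auto simp: EE_def)
  have W: "{i. i < 1 + int m * int K - int r} \<subseteq> {i. i < 1 + int (Suc m) * int K - int r}"
    by (auto simp: algebra_simps)
  have W2: "{b - int r ..< b + int L + int r} \<subseteq> {i. i < 1 + int (Suc m) * int K - int r}"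
    using K by (auto simp: algebra_simps b_def)
  have F1: "FF r L K m \<in> sets (coord \<mu> {i. i < 1 + int (Suc m) * int K - int r})"
    using Suc.IH coord_mono[OF W] by blast
  have E1: "EE r L b \<in> sets (coord \<mu> {i. i < 1 + int (Suc m) * int K - int r})"
    using EE_coord[of r L b] coord_mono[OF W2] by blast
  have F1': "FF r L K (Suc m) \<in> sets (coord \<mu> {i. i < 1 + int (Suc m) * int K - int r})"
    unfolding e using F1 E1 by auto
  have disj: "{i. i < 1 + int m * int K - int r} \<inter> {b - int r ..< b + int L + int r} = {}"
    by (auto simp: b_def)
  have "pr (FF r L K (Suc m)) = pr (FF r L K m) * pr (EE r L b)"
    unfolding e using Suc.IH by (intro coord_indep[OF mu _ EE_coord disj]) auto
  also have "\<dots> \<le> (1/2)^m * (1/2)"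
    using Suc.IH half[of b] by (intro mult_mono) auto
  finally show ?case using F1' by simp
qed

lemma tail:
  assumes half: "\<And>a. pr (EE r L a) \<le> 1/2" and K: "K = L + 2 * r" and t: "t \<ge> 1"
  shows "p0 * measure_pmf.prob T {t..} \<le> (1/2)^((t - 1) div K)"
proof -
  define m where "m = (t - 1) div K"
  define Zt where "Zt = {y \<in> \<Omega>. X 0 y \<and> (\<forall>i\<in>{1..<int t}. \<not> X i y)}"
  define Pa where "Pa s = {y \<in> \<Omega>. X 0 y \<and> (\<forall>i\<in>{1..int s}. X i y \<longleftrightarrow> i = int s)}" for s
  have mK: "m * K \<le> t - 1" unfolding m_def by simp
  have sub: "Zt \<subseteq> FF r L K m"
  proof
    fix y assume y: "y \<in> Zt"
    show "y \<in> FF r L K m" unfolding FF_def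
    proof (intro CollectI conjI ballI)
      show "y \<in> \<Omega>" using y by (simp add: Zt_def)
      fix j assume "j \<in> {..<m}"
      then have "Suc j * K \<le> m * K" by (intro mult_le_mono1) simp
      then have "j * K + L \<le> t - 1" using mK K by simp
      then have "int (j * K + L) \<le> int (t - 1)" by (simp only: of_nat_le_iff)
      then have le: "int j * int K + int L \<le> int t - 1" using t by (simp add: of_nat_diff)
      show "y \<in> EE r L (1 + int j * int K)"
        unfolding EE_def
      proof (intro CollectI conjI ballI)
        show "y \<in> \<Omega>" using y by (simp add: Zt_def)
        fix i assume i: "i \<in> {1 + int j * int K..<1 + int j * int K + int L}"
        have z: "0 \<le> int j * int K" by simp
        have i1: "1 + int j * int K \<le> i" "i < 1 + int j * int K + int L" using i by auto
        have "1 \<le> i" "i < int t" using i1 z le by linarith+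
        then have "i \<in> {1..<int t}" by simp
        then show "\<not> (X i y \<and> R (sh i y) \<le> enat r)" using y by (auto simp: Zt_def)
      qed
    qed
  qed
  have Zt_sets: "Zt \<in> sets M" unfolding Zt_def by measurable
  have FFb: "pr (FF r L K m) \<le> (1/2)^m" using blocks[OF half K] by blast
  have FFs: "FF r L K m \<in> sets M" using blocks[OF half K] coord_sub by blast
  have Pa_sets: "Pa s \<in> sets M" for s unfolding Pa_def by measurable
  have bound: "p0 * measure_pmf.prob T {t..N} \<le> (1/2)^m" for N
  proof -
    have "p0 * measure_pmf.prob T {t..N} = (\<Sum>s\<in>{t..N}. p0 * pmf T s)"
      by (simp add: measure_measure_pmf_finite sum_distrib_left)
    also have "\<dots> = (\<Sum>s\<in>{t..N}. pr (Pa s))"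
      using t by (intro sum.cong) (auto simp: Pa_def palm1)
    also have "\<dots> = pr (\<Union>s\<in>{t..N}. Pa s)"
    proof (rule P.finite_measure_finite_Union[symmetric])
      show "disjoint_family_on Pa {t..N}"
        unfolding disjoint_family_on_def
      proof (intro ballI impI)
        fix s s' assume s: "s \<in> {t..N}" "s' \<in> {t..N}" "s \<noteq> s'"
        show "Pa s \<inter> Pa s' = {}"
        proof (rule ccontr)
          assume "Pa s \<inter> Pa s' \<noteq> {}"
          then obtain y where y: "y \<in> Pa s" "y \<in> Pa s'" by blast
          have ps: "X (int s) y" using y(1) s t unfolding Pa_def by auto
          have ps': "X (int s') y" using y(2) s t unfolding Pa_def by auto
          show False
          proof (cases "s < s'")
            case True
            then show ?thesis using y(2) ps s t unfolding Pa_def by auto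
          next
            case False
            then have "s' < s" using s by simp
            then show ?thesis using y(1) ps' s t unfolding Pa_def by auto
          qed
        qed
      qed
    qed (use Pa_sets in auto)
    also have "\<dots> \<le> pr Zt"
    proof (rule P.finite_measure_mono[OF _ Zt_sets])
      show "(\<Union>s\<in>{t..N}. Pa s) \<subseteq> Zt"
        unfolding Pa_def Zt_def by force
    qed
    also have "\<dots> \<le> pr (FF r L K m)" by (rule P.finite_measure_mono[OF sub FFs])
    also have "\<dots> \<le> (1/2)^m" by (rule FFb)
    finally show ?thesis .
  qed
  have inc: "incseq (\<lambda>N. {t..N})" by (auto simp: incseq_def)
  have "(\<lambda>N. measure_pmf.prob T {t..N}) \<longlonglongrightarrow> measure_pmf.prob T (\<Union>N. {t..N})"
    by (rule measure_pmf.finite_Lim_measure_incseq[OF _ inc]) simp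
  moreover have "(\<Union>N. {t..N}) = {t..}" by auto
  ultimately have "(\<lambda>N. p0 * measure_pmf.prob T {t..N}) \<longlonglongrightarrow> p0 * measure_pmf.prob T {t..}"
    by (intro tendsto_mult_left) simp
  then show ?thesis unfolding m_def[symmetric]
    by (rule LIMSEQ_le_const2) (use bound in auto)
qed

end



lemma half_pow_exp: "(1/2::real)^m = exp (- (ln 2 * real m))"
proof -
  have "(2::real)^m = exp (ln 2 * real m)"
    by (metis exp_ln_iff exp_of_nat_mult zero_less_numeral mult.commute exp_ln)
  then show ?thesis by (simp add: exp_minus power_one_over inverse_eq_divide)
qed

lemma exp_bound_aux: "real t / real K - 1 \<le> real m \<Longrightarrow> c = ln 2 / real K \<Longrightarrow> exp (- (ln 2 * real m)) \<le> 2 * exp (- c * real t)"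
proof -
  assume mt: "real t / real K - 1 \<le> real m" and c: "c = ln 2 / real K"
  have "exp (- (ln 2 * real m)) \<le> exp (- (ln 2 * (real t / real K - 1)))"
    using mt by (simp add: mult_left_mono)
  also have "- (ln 2 * (real t / real K - 1)) = ln 2 + (- c * real t)"
    using c by (simp add: algebra_simps)
  also have "exp (ln 2 + (- c * real t)) = 2 * exp (- c * real t)"
    by (simp only: exp_add exp_ln_iff) simp
  finally show ?thesis .
qed

context rp begin

lemma exp_tails: "exponential_tails T"
proof -
  obtain L where L1: "L \<ge> 1" and LZ: "pr (Z 0 L) \<le> 1/4" using choose_L by blast
  obtain r where rq: "real L * pr (\<Omega> - {y \<in> \<Omega>. R y \<le> enat r}) \<le> 1/4" using choose_r by blast
  have half: "pr (EE r L a) \<le> 1/2" for a using EE_bound[of r L a] LZ rq by simp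
  define K where "K = L + 2 * r"
  have K1: "K \<ge> 1" using L1 unfolding K_def by simp
  define c where "c = ln 2 / real K"
  define C where "C = 2 / p0"
  have cpos: "c > 0" using K1 unfolding c_def by simp
  have Cpos: "C > 0" using p0_pos unfolding C_def by simp
  have "\<forall>t\<ge>1. measure_pmf.prob T {t..} \<le> C * exp (- c * real t)"
  proof (intro allI impI)
    fix t :: nat assume t: "t \<ge> 1"
    define m where "m = (t - 1) div K"
    have tl: "p0 * measure_pmf.prob T {t..} \<le> (1/2)^m"
      unfolding m_def by (rule tail[OF half K_def t])
    have "t - 1 < (m + 1) * K"
    proof -
      have "t - 1 = m * K + (t - 1) mod K" unfolding m_def by simp
      moreover have "(t - 1) mod K < K" using K1 by simp
      ultimately show ?thesis by simp
    qed
    then have "t \<le> (m + 1) * K" using t by simp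
    then have "real t \<le> real ((m + 1) * K)" by (simp only: of_nat_le_iff)
    then have "real t \<le> (real m + 1) * real K" by (simp add: algebra_simps)
    then have mt: "real t / real K - 1 \<le> real m" using K1 by (simp add: field_simps)
    have "(1/2::real)^m = exp (- (ln 2 * real m))" by (rule half_pow_exp)
    also have "\<dots> \<le> 2 * exp (- c * real t)"
      by (rule exp_bound_aux[OF mt c_def])
    finally have "p0 * measure_pmf.prob T {t..} \<le> 2 * exp (- c * real t)" using tl by linarith
    then have "measure_pmf.prob T {t..} \<le> 2 * exp (- c * real t) / p0"
      using p0_pos by (simp add: pos_le_divide_eq mult.commute)
    then show "measure_pmf.prob T {t..} \<le> C * exp (- c * real t)"
      unfolding C_def by simp
  qed
  then show ?thesis unfolding exponential_tails_def using cpos Cpos by blast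
qed

end

theorem proposition3:
  fixes \<mu> :: "'a measure" and \<phi> :: "(int \<Rightarrow> 'a) \<Rightarrow> bool" and T :: "nat pmf"
  assumes "prob_space \<mu>"
    and "finitary_factor \<mu> \<phi>"
    and "stationary_renewal (iid_space \<mu>) (factor_proc \<phi>) T"
  shows "non_lattice T \<and> exponential_tails T"
proof -
  interpret rp \<mu> \<phi> T by (rule rp.intro[OF assms])
  show ?thesis using nonlattice exp_tails by blast
qed



end
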